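(* Let $\Sigma$ be a finite alphabet, $n$ a positive integer and $\varphi\in\mathrm{FO}^2_n[<]$ a unique position formula. Let $u\in\Sigma^\star$ and $i\in[1,|u|]$ with $(u,i)\models\varphi$. Then $i=r(u)$ for some ranker $r\in R_n^\star$.
   Context: Words are finite structures with universe $\{1,\dots,|w|\}$, unary predicates $Q_a$ ($a\in\Sigma$) marking positions carrying $a$, and the order $<$. $\mathrm{FO}^2_n[<]$ is first-order logic over this signature using only the variables $x,y$, with quantifier depth at most $n$; $(w,i)$ denotes $w$ with $x$ interpreted as $i$. A formula $\varphi\in\mathrm{FO}^2[<]$ with free variable $x$ is a unique position formula if for every $w\in\Sigma^\star$ there is at most one $i\in[1,|w|]$ with $(w,i)\models\varphi$. Boundary positions: $\triangleright_a(w)=\min\{i:w_i=a\}$, $\triangleleft_a(w)=\max\{i:w_i=a\}$, $\triangleright_a(w,q)=\min\{i\in[q+1,|w|]:w_i=a\}$, $\triangleleft_a(w,q)=\max\{i\in[1,q-1]:w_i=a\}$ (undefined if empty). An $n$-ranker is a sequence $r=(p_1,\dots,p_n)$ of boundary positions with $r(w)=p_1(w)$ if $n=1$, undefined if $(p_1,\dots,p_{n-1})(w)$ is undefined, else $p_n(w,(p_1,\dots,p_{n-1})(w))$. $R_n^\star$ is the set of all $j$-rankers with $j\in[1,n]$. *)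

theory Defs
  imports Main
begin

text \<open>Words over a finite alphabet 'a are lists; positions are 1..length w,
  and position i carries the letter w ! (i - 1).\<close>

datatype var = VX | VY

datatype 'a fo2 =
    Q 'a var
  | Less var var
  | Eq var var
  | Neg "'a fo2"
  | Conj "'a fo2" "'a fo2"
  | Disj "'a fo2" "'a fo2"
  | Ex var "'a fo2"
  | All var "'a fo2"

fun sat :: "'a list \<Rightarrow> (var \<Rightarrow> nat) \<Rightarrow> 'a fo2 \<Rightarrow> bool" where
  "sat w \<sigma> (Q a v) = (w ! (\<sigma> v - 1) = a)"
| "sat w \<sigma> (Less v v') = (\<sigma> v < \<sigma> v')"
| "sat w \<sigma> (Eq v v') = (\<sigma> v = \<sigma> v')"
| "sat w \<sigma> (Neg f) = (\<not> sat w \<sigma> f)"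
| "sat w \<sigma> (Conj f g) = (sat w \<sigma> f \<and> sat w \<sigma> g)"
| "sat w \<sigma> (Disj f g) = (sat w \<sigma> f \<or> sat w \<sigma> g)"
| "sat w \<sigma> (Ex v f) = (\<exists>k\<in>{1..length w}. sat w (\<sigma>(v := k)) f)"
| "sat w \<sigma> (All v f) = (\<forall>k\<in>{1..length w}. sat w (\<sigma>(v := k)) f)"

fun qdepth :: "'a fo2 \<Rightarrow> nat" where
  "qdepth (Q a v) = 0"
| "qdepth (Less v v') = 0"
| "qdepth (Eq v v') = 0"
| "qdepth (Neg f) = qdepth f"
| "qdepth (Conj f g) = max (qdepth f) (qdepth g)"
| "qdepth (Disj f g) = max (qdepth f) (qdepth g)"
| "qdepth (Ex v f) = Suc (qdepth f)"
| "qdepth (All v f) = Suc (qdepth f)"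

fun fv :: "'a fo2 \<Rightarrow> var set" where
  "fv (Q a v) = {v}"
| "fv (Less v v') = {v, v'}"
| "fv (Eq v v') = {v, v'}"
| "fv (Neg f) = fv f"
| "fv (Conj f g) = fv f \<union> fv g"
| "fv (Disj f g) = fv f \<union> fv g"
| "fv (Ex v f) = fv f - {v}"
| "fv (All v f) = fv f - {v}"

text \<open>(w,i) |= phi: x interpreted as i (y is not free, its value is irrelevant).\<close>
definition models :: "'a list \<Rightarrow> nat \<Rightarrow> 'a fo2 \<Rightarrow> bool" where
  "models w i f = sat w (\<lambda>v. i) f"

definition fo2_n :: "nat \<Rightarrow> 'a fo2 set" where
  "fo2_n n = {f. qdepth f \<le> n \<and> fv f \<subseteq> {VX}}"

definition unique_position :: "'a fo2 \<Rightarrow> bool" where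
  "unique_position f \<longleftrightarrow> fv f \<subseteq> {VX} \<and>
     (\<forall>w :: 'a list. \<forall>i j. i \<in> {1..length w} \<and> j \<in> {1..length w} \<and>
        models w i f \<and> models w j f \<longrightarrow> i = j)"

datatype 'a boundary = First 'a | Last 'a

definition opt_min :: "nat set \<Rightarrow> nat option" where
  "opt_min S = (if S = {} then None else Some (Min S))"

definition opt_max :: "nat set \<Rightarrow> nat option" where
  "opt_max S = (if S = {} then None else Some (Max S))"

fun bpos :: "'a list \<Rightarrow> 'a boundary \<Rightarrow> nat option" where
  "bpos w (First a) = opt_min {i \<in> {1..length w}. w ! (i - 1) = a}"
| "bpos w (Last a) = opt_max {i \<in> {1..length w}. w ! (i - 1) = a}"

fun bpos_from :: "'a list \<Rightarrow> 'a boundary \<Rightarrow> nat \<Rightarrow> nat option" where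
  "bpos_from w (First a) q = opt_min {i \<in> {q+1..length w}. w ! (i - 1) = a}"
| "bpos_from w (Last a) q = opt_max {i \<in> {1..q-1}. w ! (i - 1) = a}"

fun ranker_go :: "'a list \<Rightarrow> nat \<Rightarrow> 'a boundary list \<Rightarrow> nat option" where
  "ranker_go w q [] = Some q"
| "ranker_go w q (p # ps) =
     (case bpos_from w p q of None \<Rightarrow> None | Some q' \<Rightarrow> ranker_go w q' ps)"

text \<open>r(w) for a ranker r = (p_1,...,p_k), represented as a list; None = undefined.\<close>
fun ranker_eval :: "'a boundary list \<Rightarrow> 'a list \<Rightarrow> nat option" where
  "ranker_eval [] w = None"
| "ranker_eval (p # ps) w =
     (case bpos w p of None \<Rightarrow> None | Some q \<Rightarrow> ranker_go w q ps)"

definition rankers_upto :: "nat \<Rightarrow> 'a boundary list set" where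
  "rankers_upto n = {r. 1 \<le> length r \<and> length r \<le> n}"

end

theory Submission
  imports Defs
begin



fun other :: "var \<Rightarrow> var" where "other VX = VY" | "other VY = VX"

lemma upd_ok:
  fixes \<sigma> \<sigma>' :: "var \<Rightarrow> nat"
  assumes "\<forall>x y. (\<sigma> x < \<sigma> y \<longleftrightarrow> \<sigma>' x < \<sigma>' y)"
    "\<sigma> (other v) < q \<longleftrightarrow> \<sigma>' (other v) < q'" "q < \<sigma> (other v) \<longleftrightarrow> q' < \<sigma>' (other v)"
  shows "\<forall>x y. ((\<sigma>(v:=q)) x < (\<sigma>(v:=q)) y \<longleftrightarrow> (\<sigma>'(v:=q')) x < (\<sigma>'(v:=q')) y)"
  using assms apply (intro allI)
  apply (case_tac x; case_tac y; cases v) by simp_all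

lemma upd_E:
  assumes "E q q'" "E (\<sigma> (other v)) (\<sigma>' (other v))"
  shows "\<forall>x. E ((\<sigma>(v:=q)) x) ((\<sigma>'(v:=q')) x)"
  using assms apply (intro allI)
  apply (case_tac x; cases v) by auto

lemma upd_rng:
  assumes "q \<in> A" "\<forall>x. \<sigma> x \<in> A"
  shows "\<forall>x. (\<sigma>(v:=q)) x \<in> A"
  using assms by auto

lemma EF:
  fixes E :: "nat \<Rightarrow> nat \<Rightarrow> nat \<Rightarrow> bool" and u :: "'a list" and w :: "'a list"
  assumes letter: "\<And>k p p'. E k p p' \<Longrightarrow> u!(p-1) = w!(p'-1)"
  and mono: "\<And>k p p'. E (Suc k) p p' \<Longrightarrow> E k p p'"
  and forth: "\<And>k p p' q. Suc k \<le> n \<Longrightarrow> E (Suc k) p p' \<Longrightarrow> p \<in> {1..length u} \<Longrightarrow> p' \<in> {1..length w}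
     \<Longrightarrow> q \<in> {1..length u} \<Longrightarrow> \<exists>q'\<in>{1..length w}. E k q q' \<and> (p < q \<longleftrightarrow> p' < q') \<and> (q < p \<longleftrightarrow> q' < p')"
  and bck: "\<And>k p p' q'. Suc k \<le> n \<Longrightarrow> E (Suc k) p p' \<Longrightarrow> p \<in> {1..length u} \<Longrightarrow> p' \<in> {1..length w}
     \<Longrightarrow> q' \<in> {1..length w} \<Longrightarrow> \<exists>q\<in>{1..length u}. E k q q' \<and> (p < q \<longleftrightarrow> p' < q') \<and> (q < p \<longleftrightarrow> q' < p')"
  shows "qdepth \<psi> \<le> k \<Longrightarrow> k \<le> n \<Longrightarrow> \<forall>x. E k (\<sigma> x) (\<sigma>' x) \<Longrightarrow> \<forall>x. \<sigma> x \<in> {1..length u}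
    \<Longrightarrow> \<forall>x. \<sigma>' x \<in> {1..length w} \<Longrightarrow> \<forall>x y. (\<sigma> x < \<sigma> y \<longleftrightarrow> \<sigma>' x < \<sigma>' y)
    \<Longrightarrow> sat u \<sigma> \<psi> = sat w \<sigma>' \<psi>"
proof (induction \<psi> arbitrary: \<sigma> \<sigma>' k)
  case (Q a v)
  then show ?case using letter by (metis sat.simps(1))
next
  case (Less v v')
  then show ?case by auto
next
  case (Eq v v')
  have a: "(\<sigma> v < \<sigma> v') = (\<sigma>' v < \<sigma>' v')" "(\<sigma> v' < \<sigma> v) = (\<sigma>' v' < \<sigma>' v)"
    using Eq.prems(6) by auto
  then show ?case by (simp; metis linorder_neqE_nat less_irrefl)
next
  case (Neg f) then show ?case by auto
next
  case (Conj f g) then show ?case by auto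
next
  case (Disj f g) then show ?case by auto
next
  case (Ex v f)
  from Ex.prems(1) obtain k' where k: "k = Suc k'" "qdepth f \<le> k'" by (cases k) auto
  show ?case
  proof
    assume "sat u \<sigma> (fo2.Ex v f)"
    then obtain q where q0: "q \<in> {1..length u}" and q: "q \<in> {1..length u}" "sat u (\<sigma>(v:=q)) f" by auto
    obtain q' where q'0: "q' \<in> {1..length w}" and q': "q' \<in> {1..length w}" "E k' q q'" "\<sigma> (other v) < q \<longleftrightarrow> \<sigma>' (other v) < q'"
       "q < \<sigma> (other v) \<longleftrightarrow> q' < \<sigma>' (other v)"
      using forth[of k' "\<sigma> (other v)" "\<sigma>' (other v)" q, OF _ _ _ _ q0] Ex.prems(2,3,4,5) k(1) by blast
    have c1: "\<forall>x. E k' ((\<sigma>(v:=q)) x) ((\<sigma>'(v:=q')) x)"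
      apply (rule upd_E[where E="E k'"])
      using q q' apply blast
      using mono Ex.prems(3) k(1) by blast
    have c2: "\<forall>x y. ((\<sigma>(v:=q)) x < (\<sigma>(v:=q)) y \<longleftrightarrow> (\<sigma>'(v:=q')) x < (\<sigma>'(v:=q')) y)"
      apply (rule upd_ok) using Ex.prems(6) q q' by blast+
    have c3: "\<forall>x. (\<sigma>(v:=q)) x \<in> {1..length u}" "\<forall>x. (\<sigma>'(v:=q')) x \<in> {1..length w}"
      using Ex.prems(4,5) q q' q0 q'0 by simp_all
    have "sat u (\<sigma>(v:=q)) f = sat w (\<sigma>'(v:=q')) f"
      by (rule Ex.IH[OF k(2) _ c1 c3 c2]) (use k Ex.prems(2) in simp)
    then show "sat w \<sigma>' (fo2.Ex v f)" using q q' by auto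
  next
    assume "sat w \<sigma>' (fo2.Ex v f)"
    then obtain q' where q'0: "q' \<in> {1..length w}" and q': "q' \<in> {1..length w}" "sat w (\<sigma>'(v:=q')) f" by auto
    obtain q where q0: "q \<in> {1..length u}" and q: "q \<in> {1..length u}" "E k' q q'" "\<sigma> (other v) < q \<longleftrightarrow> \<sigma>' (other v) < q'"
       "q < \<sigma> (other v) \<longleftrightarrow> q' < \<sigma>' (other v)"
      using bck[of k' "\<sigma> (other v)" "\<sigma>' (other v)" q', OF _ _ _ _ q'0] Ex.prems(2,3,4,5) k(1) by blast
    have c1: "\<forall>x. E k' ((\<sigma>(v:=q)) x) ((\<sigma>'(v:=q')) x)"
      apply (rule upd_E[where E="E k'"])
      using q q' apply blast
      using mono Ex.prems(3) k(1) by blast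
    have c2: "\<forall>x y. ((\<sigma>(v:=q)) x < (\<sigma>(v:=q)) y \<longleftrightarrow> (\<sigma>'(v:=q')) x < (\<sigma>'(v:=q')) y)"
      apply (rule upd_ok) using Ex.prems(6) q q' by blast+
    have c3: "\<forall>x. (\<sigma>(v:=q)) x \<in> {1..length u}" "\<forall>x. (\<sigma>'(v:=q')) x \<in> {1..length w}"
      using Ex.prems(4,5) q q' q0 q'0 by simp_all
    have "sat u (\<sigma>(v:=q)) f = sat w (\<sigma>'(v:=q')) f"
      by (rule Ex.IH[OF k(2) _ c1 c3 c2]) (use k Ex.prems(2) in simp)
    then show "sat u \<sigma> (fo2.Ex v f)" using q q' by auto
  qed
next
  case (All v f)
  from All.prems(1) obtain k' where k: "k = Suc k'" "qdepth f \<le> k'" by (cases k) auto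
  show ?case
  proof
    assume A: "sat u \<sigma> (fo2.All v f)"
    show "sat w \<sigma>' (fo2.All v f)"
    proof (unfold sat.simps, intro ballI)
      fix q' assume q'0: "q' \<in> {1..length w}" hence q': "q' \<in> {1..length w}" .
    obtain q where q0: "q \<in> {1..length u}" and q: "q \<in> {1..length u}" "E k' q q'" "\<sigma> (other v) < q \<longleftrightarrow> \<sigma>' (other v) < q'"
       "q < \<sigma> (other v) \<longleftrightarrow> q' < \<sigma>' (other v)"
      using bck[of k' "\<sigma> (other v)" "\<sigma>' (other v)" q', OF _ _ _ _ q'0] All.prems(2,3,4,5) k(1) by blast
    have c1: "\<forall>x. E k' ((\<sigma>(v:=q)) x) ((\<sigma>'(v:=q')) x)"
      apply (rule upd_E[where E="E k'"])
      using q q' apply blast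
      using mono All.prems(3) k(1) by blast
    have c2: "\<forall>x y. ((\<sigma>(v:=q)) x < (\<sigma>(v:=q)) y \<longleftrightarrow> (\<sigma>'(v:=q')) x < (\<sigma>'(v:=q')) y)"
      apply (rule upd_ok) using All.prems(6) q q' by blast+
    have c3: "\<forall>x. (\<sigma>(v:=q)) x \<in> {1..length u}" "\<forall>x. (\<sigma>'(v:=q')) x \<in> {1..length w}"
      using All.prems(4,5) q q' q0 q'0 by simp_all
    have "sat u (\<sigma>(v:=q)) f = sat w (\<sigma>'(v:=q')) f"
      by (rule All.IH[OF k(2) _ c1 c3 c2]) (use k All.prems(2) in simp)
    then show "sat w (\<sigma>'(v:=q')) f" using q A by auto
  qed
  next
    assume A: "sat w \<sigma>' (fo2.All v f)"
    show "sat u \<sigma> (fo2.All v f)"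
    proof (unfold sat.simps, intro ballI)
      fix q assume q0: "q \<in> {1..length u}" hence q: "q \<in> {1..length u}" .
    obtain q' where q'0: "q' \<in> {1..length w}" and q': "q' \<in> {1..length w}" "E k' q q'" "\<sigma> (other v) < q \<longleftrightarrow> \<sigma>' (other v) < q'"
       "q < \<sigma> (other v) \<longleftrightarrow> q' < \<sigma>' (other v)"
      using forth[of k' "\<sigma> (other v)" "\<sigma>' (other v)" q, OF _ _ _ _ q0] All.prems(2,3,4,5) k(1) by blast
    have c1: "\<forall>x. E k' ((\<sigma>(v:=q)) x) ((\<sigma>'(v:=q')) x)"
      apply (rule upd_E[where E="E k'"])
      using q q' apply blast
      using mono All.prems(3) k(1) by blast
    have c2: "\<forall>x y. ((\<sigma>(v:=q)) x < (\<sigma>(v:=q)) y \<longleftrightarrow> (\<sigma>'(v:=q')) x < (\<sigma>'(v:=q')) y)"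
      apply (rule upd_ok) using All.prems(6) q q' by blast+
    have c3: "\<forall>x. (\<sigma>(v:=q)) x \<in> {1..length u}" "\<forall>x. (\<sigma>'(v:=q')) x \<in> {1..length w}"
      using All.prems(4,5) q q' q0 q'0 by simp_all
    have "sat u (\<sigma>(v:=q)) f = sat w (\<sigma>'(v:=q')) f"
      by (rule All.IH[OF k(2) _ c1 c3 c2]) (use k All.prems(2) in simp)
    then show "sat u (\<sigma>(v:=q)) f" using q' A by auto
  qed
  qed
qed



definition Pk :: "'a list \<Rightarrow> nat \<Rightarrow> nat set" where
  "Pk u k = {t. \<exists>r. 1 \<le> length r \<and> length r \<le> k \<and> ranker_eval r u = Some t}"

lemma Pk_mono: "k \<le> k' \<Longrightarrow> Pk u k \<subseteq> Pk u k'"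
  unfolding Pk_def by auto

lemma go_snoc: "ranker_go w q (ps @ [p]) = (case ranker_go w q ps of None \<Rightarrow> None | Some q' \<Rightarrow> bpos_from w p q')"
  by (induction ps arbitrary: q) (auto split: option.splits)

lemma eval_snoc: "r \<noteq> [] \<Longrightarrow> ranker_eval (r @ [p]) w = (case ranker_eval r w of None \<Rightarrow> None | Some q \<Rightarrow> bpos_from w p q)"
  by (cases r) (auto simp: go_snoc split: option.splits)

lemma Pk_first:
  assumes "t \<in> {1..length u}" "u!(t-1) = b" "1 \<le> k"
  shows "Min {s\<in>{1..length u}. u!(s-1) = b} \<in> Pk u k"
proof -
  have "ranker_eval [First b] u = Some (Min {s\<in>{1..length u}. u!(s-1) = b})"
    using assms by (auto simp: opt_min_def)
  then show ?thesis unfolding Pk_def using assms(3) by (intro CollectI exI[of _ "[First b]"]) auto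
qed

lemma Pk_last:
  assumes "t \<in> {1..length u}" "u!(t-1) = b" "1 \<le> k"
  shows "Max {s\<in>{1..length u}. u!(s-1) = b} \<in> Pk u k"
proof -
  have "ranker_eval [Last b] u = Some (Max {s\<in>{1..length u}. u!(s-1) = b})"
    using assms by (auto simp: opt_max_def)
  then show ?thesis unfolding Pk_def using assms(3) by (intro CollectI exI[of _ "[Last b]"]) auto
qed

lemma Pk_next:
  assumes "t \<in> Pk u k" "s \<in> {t+1..length u}" "u!(s-1) = b"
  shows "Min {s\<in>{t+1..length u}. u!(s-1) = b} \<in> Pk u (Suc k)"
proof -
  obtain r where r: "1 \<le> length r" "length r \<le> k" "ranker_eval r u = Some t"
    using assms(1) unfolding Pk_def by auto
  have "ranker_eval (r @ [First b]) u = Some (Min {s\<in>{t+1..length u}. u!(s-1) = b})"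
    using r assms by (subst eval_snoc) (auto simp: opt_min_def)
  then show ?thesis unfolding Pk_def using r by (intro CollectI exI[of _ "r @ [First b]"]) auto
qed

lemma Pk_prev:
  assumes "t \<in> Pk u k" "s \<in> {1..t-1}" "u!(s-1) = b"
  shows "Max {s\<in>{1..t-1}. u!(s-1) = b} \<in> Pk u (Suc k)"
proof -
  obtain r where r: "1 \<le> length r" "length r \<le> k" "ranker_eval r u = Some t"
    using assms(1) unfolding Pk_def by auto
  have "ranker_eval (r @ [Last b]) u = Some (Max {s\<in>{1..t-1}. u!(s-1) = b})"
    using r assms by (subst eval_snoc) (auto simp: opt_max_def)
  then show ?thesis unfolding Pk_def using r by (intro CollectI exI[of _ "r @ [Last b]"]) auto
qed





locale dup =
  fixes u w :: "'a list" and h :: "nat \<Rightarrow> nat" and i n :: nat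
  assumes hr: "p' \<in> {1..length w} \<Longrightarrow> h p' \<in> {1..length u}"
  and hl: "p' \<in> {1..length w} \<Longrightarrow> w!(p'-1) = u!(h p' - 1)"
  and hm: "p' \<le> q' \<Longrightarrow> h p' \<le> h q'"
  and hs: "q \<in> {1..length u} \<Longrightarrow> \<exists>q'\<in>{1..length w}. h q' = q"
  and hi: "h q' = h p' \<Longrightarrow> q' \<noteq> p' \<Longrightarrow> h p' = i"
  and ni: "i \<notin> Pk u n"
begin

definition gf where "gf k x y \<longleftrightarrow> (\<forall>t. min x y \<le> t \<longrightarrow> t \<le> max x y \<longrightarrow> t \<notin> Pk u k)"
definition E where "E k p p' \<longleftrightarrow> u!(p-1) = w!(p'-1) \<and> (p = h p' \<or> gf k p (h p'))"

lemma gf_le: "x \<le> y \<Longrightarrow> gf k x y \<longleftrightarrow> (\<forall>t. x \<le> t \<longrightarrow> t \<le> y \<longrightarrow> t \<notin> Pk u k)"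
  unfolding gf_def by (simp add: min_def max_def)
lemma gf_ge: "y \<le> x \<Longrightarrow> gf k x y \<longleftrightarrow> (\<forall>t. y \<le> t \<longrightarrow> t \<le> x \<longrightarrow> t \<notin> Pk u k)"
  unfolding gf_def by (simp add: min_def max_def)

lemma E_mono: "E (Suc k) p p' \<Longrightarrow> E k p p'"
proof -
  have S: "Pk u k \<subseteq> Pk u (Suc k)" by (rule Pk_mono) simp
  assume "E (Suc k) p p'"
  then show "E k p p'" using S unfolding E_def gf_def by auto
qed

lemma hlt: "h q' < h p' \<Longrightarrow> q' < p'"
  using hm[of p' q'] by linarith

lemma forth:
  assumes "Suc k \<le> n" "E (Suc k) p p'" "p \<in> {1..length u}" "p' \<in> {1..length w}" "q \<in> {1..length u}"
  shows "\<exists>q'\<in>{1..length w}. E k q q' \<and> (p < q \<longleftrightarrow> p' < q') \<and> (q < p \<longleftrightarrow> q' < p')"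
proof -
  define c where "c = h p'"
  have gap: "\<And>t. p \<noteq> c \<Longrightarrow> min p c \<le> t \<Longrightarrow> t \<le> max p c \<Longrightarrow> t \<in> Pk u (Suc k) \<Longrightarrow> False"
    using assms(2) by (auto simp: E_def gf_def c_def)
  have PkS: "Pk u k \<subseteq> Pk u (Suc k)" by (rule Pk_mono) simp
  have fin: "\<And>P. finite {s\<in>{1..length u}. P s}" "\<And>P. finite {s\<in>{1..length w}. P s}" by auto
  consider "q = p" | "q < p \<and> q < c" | "q < p \<and> c \<le> q" | "p < q \<and> c < q" | "p < q \<and> q \<le> c" by linarith
  then show ?thesis
  proof cases
    case 1 then show ?thesis using assms E_mono by (intro bexI[of _ p']) auto
  next
    case 2
    obtain q' where q': "q' \<in> {1..length w}" "h q' = q" using hs assms(5) by blast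
    have "q' < p'" using hlt[of q' p'] q' 2 c_def by simp
    moreover have "E k q q'" using hl q' by (simp add: E_def)
    ultimately show ?thesis using q' 2 by auto
  next
    case 3
    define b where "b = u!(q-1)"
    define B where "B = {s\<in>{1..length u}. u!(s-1) = b}"
    have qB: "q \<in> B" using assms(5) by (simp add: B_def b_def)
    have fB: "finite B" by (simp add: B_def)
    have fP: "Min B \<in> Pk u (Suc k)" unfolding B_def using Pk_first[of q u b "Suc k"] assms(5) b_def by simp
    have "Min B \<le> q" using qB fB by simp
    have "Min B < c"
    proof (rule ccontr)
      assume "\<not> Min B < c"
      then show False using gap[of "Min B"] fP \<open>Min B \<le> q\<close> 3 by simp
    qed
    have MinB: "Min B \<in> B" using qB fB Min_in by blast
    obtain t0' where t0': "t0' \<in> {1..length w}" "h t0' = Min B" using hs MinB B_def by blast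
    have "t0' < p'" using hlt[of t0' p'] t0' \<open>Min B < c\<close> c_def by simp
    have "w!(t0'-1) = b" using hl[OF t0'(1)] t0'(2) MinB B_def by simp
    define B' where "B' = {s\<in>{1..p'-1}. w!(s-1) = b}"
    have t0B: "t0' \<in> B'" using t0' \<open>t0' < p'\<close> \<open>w!(t0'-1) = b\<close> by (simp add: B'_def)
    have fB': "finite B'" by (simp add: B'_def)
    define q' where "q' = Max B'"
    have q'B: "q' \<in> B'" using t0B fB' q'_def Max_in by blast
    have q'r: "q' \<in> {1..length w}" "q' < p'" "w!(q'-1) = b" using q'B assms(4) by (auto simp: B'_def)
    define d where "d = h q'"
    have "d \<le> c" using hm[of q' p'] q'r d_def c_def by simp
    have "gf k q d"
    proof (subst gf_ge)
      show "d \<le> q" using \<open>d \<le> c\<close> 3 by simp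
      show "\<forall>t. d \<le> t \<longrightarrow> t \<le> q \<longrightarrow> t \<notin> Pk u k"
      proof (intro allI impI notI)
        fix t assume t: "d \<le> t" "t \<le> q" "t \<in> Pk u k"
        show False
        proof (cases "c \<le> t")
          case True then show False using gap[of t] t PkS 3 by auto
        next
          case False
          define S where "S = {s\<in>{t+1..length u}. u!(s-1) = b}"
          have qS: "q \<in> S" using False 3 assms(5) by (simp add: S_def b_def)
          have fS: "finite S" by (simp add: S_def)
          have mP: "Min S \<in> Pk u (Suc k)" unfolding S_def using Pk_next[OF t(3), of q b] qS S_def by simp
          have mS: "Min S \<in> S" using qS fS Min_in by blast
          have "Min S \<le> q" using qS fS by simp
          show False
          proof (cases "Min S < c")
            case True
            obtain m' where m': "m' \<in> {1..length w}" "h m' = Min S" using hs[of "Min S"] mS S_def by auto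
            have "q' < m'" using hlt[of q' m'] m' mS t d_def S_def by simp
            moreover have "m' < p'" using hlt[of m' p'] m' True c_def by simp
            moreover have "w!(m'-1) = b" using hl[OF m'(1)] m' mS S_def by simp
            ultimately have "m' \<in> B'" using m' by (simp add: B'_def)
            then have "m' \<le> q'" using fB' q'_def by simp
            then show False using \<open>q' < m'\<close> by simp
          next
            case False
            then show False using gap[of "Min S"] mP \<open>Min S \<le> q\<close> 3 by simp
          qed
        qed
      qed
    qed
    then have "E k q q'" using q'r b_def d_def by (simp add: E_def)
    then show ?thesis using q'r 3 by (intro bexI[of _ q']) auto
  next
    case 4
    obtain q' where q': "q' \<in> {1..length w}" "h q' = q" using hs assms(5) by blast
    have "p' < q'" using hlt[of p' q'] q' 4 c_def by simp
    moreover have "E k q q'" using hl q' by (simp add: E_def)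
    ultimately show ?thesis using q' 4 by auto
  next
    case 5
    define b where "b = u!(q-1)"
    define B where "B = {s\<in>{1..length u}. u!(s-1) = b}"
    have qB: "q \<in> B" using assms(5) by (simp add: B_def b_def)
    have fB: "finite B" by (simp add: B_def)
    have fP: "Max B \<in> Pk u (Suc k)" unfolding B_def using Pk_last[of q u b "Suc k"] assms(5) b_def by simp
    have "q \<le> Max B" using qB fB by simp
    have "c < Max B"
    proof (rule ccontr)
      assume "\<not> c < Max B"
      then show False using gap[of "Max B"] fP \<open>q \<le> Max B\<close> 5 by simp
    qed
    have MaxB: "Max B \<in> B" using qB fB Max_in by blast
    obtain t0' where t0': "t0' \<in> {1..length w}" "h t0' = Max B" using hs MaxB B_def by blast
    have "p' < t0'" using hlt[of p' t0'] t0' \<open>c < Max B\<close> c_def by simp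
    have "w!(t0'-1) = b" using hl[OF t0'(1)] t0'(2) MaxB B_def by simp
    define B' where "B' = {s\<in>{p'+1..length w}. w!(s-1) = b}"
    have t0B: "t0' \<in> B'" using t0' \<open>p' < t0'\<close> \<open>w!(t0'-1) = b\<close> by (simp add: B'_def)
    have fB': "finite B'" by (simp add: B'_def)
    define q' where "q' = Min B'"
    have q'B: "q' \<in> B'" using t0B fB' q'_def Min_in by blast
    have q'r: "q' \<in> {1..length w}" "p' < q'" "w!(q'-1) = b" using q'B assms(4) by (auto simp: B'_def)
    define d where "d = h q'"
    have "c \<le> d" using hm[of p' q'] q'r d_def c_def by simp
    have "gf k q d"
    proof (subst gf_le)
      show "q \<le> d" using \<open>c \<le> d\<close> 5 by simp
      show "\<forall>t. q \<le> t \<longrightarrow> t \<le> d \<longrightarrow> t \<notin> Pk u k"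
      proof (intro allI impI notI)
        fix t assume t: "q \<le> t" "t \<le> d" "t \<in> Pk u k"
        show False
        proof (cases "t \<le> c")
          case True then show False using gap[of t] t PkS 5 by auto
        next
          case False
          define S where "S = {s\<in>{1..t-1}. u!(s-1) = b}"
          have qS: "q \<in> S" using False 5 assms(5) by (auto simp: S_def b_def)
          have fS: "finite S" by (simp add: S_def)
          have mP: "Max S \<in> Pk u (Suc k)" unfolding S_def using Pk_prev[OF t(3), of q b] qS S_def by simp
          have mS: "Max S \<in> S" using qS fS Max_in by blast
          have "q \<le> Max S" using qS fS by simp
          have mlen: "Max S \<in> {1..length u}" using mS S_def t q'r hr[of q'] d_def by auto
          show False
          proof (cases "c < Max S")
            case True
            obtain m' where m': "m' \<in> {1..length w}" "h m' = Max S" using hs[of "Max S"] mlen by auto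
            have "Max S < d" using mS t by (auto simp: S_def)
            then have "m' < q'" using hlt[of m' q'] m' d_def by simp
            moreover have "p' < m'" using hlt[of p' m'] m' True c_def by simp
            moreover have "w!(m'-1) = b" using hl[OF m'(1)] m' mS S_def by simp
            ultimately have "m' \<in> B'" using m' by (simp add: B'_def)
            then have "q' \<le> m'" using fB' q'_def by simp
            then show False using \<open>m' < q'\<close> by simp
          next
            case False
            then show False using gap[of "Max S"] mP \<open>q \<le> Max S\<close> 5 by simp
          qed
        qed
      qed
    qed
    then have "E k q q'" using q'r b_def d_def by (simp add: E_def)
    then show ?thesis using q'r 5 by (intro bexI[of _ q']) auto
  qed
qed


lemma bck:
  assumes "Suc k \<le> n" "E (Suc k) p p'" "p \<in> {1..length u}" "p' \<in> {1..length w}" "q' \<in> {1..length w}"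
  shows "\<exists>q\<in>{1..length u}. E k q q' \<and> (p < q \<longleftrightarrow> p' < q') \<and> (q < p \<longleftrightarrow> q' < p')"
proof -
  define c where "c = h p'"
  define d where "d = h q'"
  have iS: "i \<notin> Pk u (Suc k)" using ni Pk_mono[OF assms(1), of u] by blast
  have PkS: "Pk u k \<subseteq> Pk u (Suc k)" by (rule Pk_mono) simp
  have dr: "d \<in> {1..length u}" using hr assms(5) d_def by simp
  define b where "b = w!(q'-1)"
  have db: "u!(d-1) = b" using hl assms(5) b_def d_def by simp
  define B where "B = {s\<in>{1..length u}. u!(s-1) = b}"
  have dB: "d \<in> B" using dr db by (simp add: B_def)
  have fB: "finite B" by (simp add: B_def)
  consider "q' = p'" | "q' < p' \<and> d < p" | "q' < p' \<and> p \<le> d" | "p' < q' \<and> p < d" | "p' < q' \<and> d \<le> p" by linarith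
  then show ?thesis
  proof cases
    case 1 then show ?thesis using assms E_mono by (intro bexI[of _ p]) auto
  next
    case 2
    have "E k d q'" using hl assms(5) d_def by (simp add: E_def)
    then show ?thesis using dr 2 by (intro bexI[of _ d]) auto
  next
    case 4
    have "E k d q'" using hl assms(5) d_def by (simp add: E_def)
    then show ?thesis using dr 4 by (intro bexI[of _ d]) auto
  next
    case 3
    have "d \<le> c" using hm[of q' p'] 3 c_def d_def by simp
    have G: "\<And>t. p \<le> t \<Longrightarrow> t \<le> c \<Longrightarrow> t \<in> Pk u (Suc k) \<Longrightarrow> False"
    proof -
      fix t assume t: "p \<le> t" "t \<le> c" "t \<in> Pk u (Suc k)"
      show False
      proof (cases "p = c")
        case True
        then have "c = i" using hi[of q' p'] 3 \<open>d \<le> c\<close> c_def d_def by simp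
        then show False using t True iS by simp
      next
        case False
        then show False using assms(2) t 3 \<open>d \<le> c\<close> unfolding E_def c_def by (auto simp: gf_le)
      qed
    qed
    have fP: "Min B \<in> Pk u (Suc k)" unfolding B_def using Pk_first[of d u b "Suc k"] dr db by simp
    have "Min B \<le> d" using dB fB by simp
    have "Min B < p" using G[of "Min B"] fP \<open>Min B \<le> d\<close> \<open>d \<le> c\<close> by (meson le_trans not_le)
    have MinB: "Min B \<in> B" using dB fB Min_in by blast
    define A where "A = {s\<in>{1..p-1}. u!(s-1) = b}"
    have mA: "Min B \<in> A" using MinB \<open>Min B < p\<close> by (simp add: A_def B_def)
    have fA: "finite A" by (simp add: A_def)
    define q where "q = Max A"
    have qA: "q \<in> A" using mA fA q_def Max_in by blast
    have qr: "q \<in> {1..length u}" "q < p" "u!(q-1) = b" using qA assms(3) by (auto simp: A_def)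
    have "gf k q d"
    proof (subst gf_le)
      show "q \<le> d" using qr 3 by simp
      show "\<forall>t. q \<le> t \<longrightarrow> t \<le> d \<longrightarrow> t \<notin> Pk u k"
      proof (intro allI impI notI)
        fix t assume t: "q \<le> t" "t \<le> d" "t \<in> Pk u k"
        show False
        proof (cases "p \<le> t")
          case True then show False using G[of t] t PkS \<open>d \<le> c\<close> by auto
        next
          case False
          define S where "S = {s\<in>{t+1..length u}. u!(s-1) = b}"
          have dS: "d \<in> S" using False 3 dr db by (simp add: S_def)
          have fS: "finite S" by (simp add: S_def)
          have mP: "Min S \<in> Pk u (Suc k)" unfolding S_def using Pk_next[OF t(3), of d b] dS S_def by simp
          have mS: "Min S \<in> S" using dS fS Min_in by blast
          have "Min S \<le> d" using dS fS by simp
          show False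
          proof (cases "Min S < p")
            case True
            then have "Min S \<in> A" using mS by (auto simp: A_def S_def)
            then have "Min S \<le> q" using fA q_def by simp
            then show False using mS t by (auto simp: S_def)
          next
            case False
            then show False using G[of "Min S"] mP \<open>Min S \<le> d\<close> \<open>d \<le> c\<close> by simp
          qed
        qed
      qed
    qed
    then have "E k q q'" using qr db b_def d_def by (simp add: E_def)
    then show ?thesis using qr 3 by (intro bexI[of _ q]) auto
  next
    case 5
    have "c \<le> d" using hm[of p' q'] 5 c_def d_def by simp
    have G: "\<And>t. c \<le> t \<Longrightarrow> t \<le> p \<Longrightarrow> t \<in> Pk u (Suc k) \<Longrightarrow> False"
    proof -
      fix t assume t: "c \<le> t" "t \<le> p" "t \<in> Pk u (Suc k)"
      show False
      proof (cases "p = c")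
        case True
        then have "c = i" using hi[of q' p'] 5 \<open>c \<le> d\<close> c_def d_def by simp
        then show False using t True iS by simp
      next
        case False
        then show False using assms(2) t 5 \<open>c \<le> d\<close> unfolding E_def c_def by (auto simp: gf_ge)
      qed
    qed
    have fP: "Max B \<in> Pk u (Suc k)" unfolding B_def using Pk_last[of d u b "Suc k"] dr db by simp
    have "d \<le> Max B" using dB fB by simp
    have "p < Max B" using G[of "Max B"] fP \<open>d \<le> Max B\<close> \<open>c \<le> d\<close> by (meson le_trans not_le)
    have MaxB: "Max B \<in> B" using dB fB Max_in by blast
    define A where "A = {s\<in>{p+1..length u}. u!(s-1) = b}"
    have mA: "Max B \<in> A" using MaxB \<open>p < Max B\<close> by (simp add: A_def B_def)
    have fA: "finite A" by (simp add: A_def)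
    define q where "q = Min A"
    have qA: "q \<in> A" using mA fA q_def Min_in by blast
    have qr: "q \<in> {1..length u}" "p < q" "u!(q-1) = b" using qA assms(3) by (auto simp: A_def)
    have "gf k q d"
    proof (subst gf_ge)
      show "d \<le> q" using qr 5 by simp
      show "\<forall>t. d \<le> t \<longrightarrow> t \<le> q \<longrightarrow> t \<notin> Pk u k"
      proof (intro allI impI notI)
        fix t assume t: "d \<le> t" "t \<le> q" "t \<in> Pk u k"
        show False
        proof (cases "t \<le> p")
          case True then show False using G[of t] t PkS \<open>c \<le> d\<close> by auto
        next
          case False
          define S where "S = {s\<in>{1..t-1}. u!(s-1) = b}"
          have dS: "d \<in> S" using False 5 dr db by (auto simp: S_def)
          have fS: "finite S" by (simp add: S_def)
          have mP: "Max S \<in> Pk u (Suc k)" unfolding S_def using Pk_prev[OF t(3), of d b] dS S_def by simp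
          have mS: "Max S \<in> S" using dS fS Max_in by blast
          have "d \<le> Max S" using dS fS by simp
          show False
          proof (cases "p < Max S")
            case True
            have ml: "Max S < t" using mS by (auto simp: S_def)
            have "Max S \<le> length u" using ml t qr(1) by simp
            then have "Max S \<in> A" using mS True unfolding A_def S_def by auto
            then have "q \<le> Max S" using fA q_def by simp
            then show False using ml t by simp
          next
            case False
            then show False using G[of "Max S"] mP \<open>d \<le> Max S\<close> \<open>c \<le> d\<close> by simp
          qed
        qed
      qed
    qed
    then have "E k q q'" using qr db b_def d_def by (simp add: E_def)
    then show ?thesis using qr 5 by (intro bexI[of _ q]) auto
  qed
qed

end



theorem lemma3p11:
  fixes \<phi> :: "('a::finite) fo2" and n :: nat and u :: "'a list" and i :: nat
  assumes "n \<ge> 1"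
    and "\<phi> \<in> fo2_n n"
    and "unique_position \<phi>"
    and "i \<in> {1..length u}"
    and "models u i \<phi>"
  shows "\<exists>r \<in> rankers_upto n. ranker_eval r u = Some i"
proof (rule ccontr)
  assume H: "\<not> (\<exists>r \<in> rankers_upto n. ranker_eval r u = Some i)"
  then have ni: "i \<notin> Pk u n" by (auto simp: Pk_def rankers_upto_def)
  define a where "a = u!(i-1)"
  define w where "w = take i u @ a # drop i u"
  define h where "h = (\<lambda>p'::nat. if p' \<le> i then p' else p' - 1)"
  have iu: "1 \<le> i" "i \<le> length u" using assms(4) by auto
  have lw: "length w = Suc (length u)" using iu by (simp add: w_def)
  have hl: "w!(p'-1) = u!(h p' - 1)" if "p' \<in> {1..length w}" for p'
  proof -
    consider "p' \<le> i" | "p' = Suc i" | "Suc i < p'" by linarith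
    then show ?thesis
    proof cases
      case 1 then show ?thesis using that iu by (auto simp: w_def h_def nth_append)
    next
      case 2 then show ?thesis using that iu by (auto simp: w_def h_def nth_append a_def)
    next
      case 3
      define m where "m = p' - i - 2"
      have m: "p' = m + i + 2" using 3 by (simp add: m_def)
      have "w!(p'-1) = (a # drop i u) ! (Suc m)" using m iu by (simp add: w_def nth_append)
      also have "\<dots> = u!(i+m)" using m iu that lw by simp
      finally show ?thesis using m by (simp add: h_def add.commute)
    qed
  qed
  interpret dup u w h i n
  proof
    show "h p' \<in> {1..length u}" if "p' \<in> {1..length w}" for p'
      using that iu lw by (auto simp: h_def)
    show "w!(p'-1) = u!(h p' - 1)" if "p' \<in> {1..length w}" for p' using hl that by blast
    show "h p' \<le> h q'" if "p' \<le> q'" for p' q' using that by (auto simp: h_def)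
    show "\<exists>q'\<in>{1..length w}. h q' = q" if "q \<in> {1..length u}" for q
    proof (cases "q \<le> i")
      case True then show ?thesis using that lw by (intro bexI[of _ q]) (auto simp: h_def)
    next
      case False then show ?thesis using that lw by (intro bexI[of _ "Suc q"]) (auto simp: h_def)
    qed
    show "h p' = i" if "h q' = h p'" "q' \<noteq> p'" for q' p' using that by (auto simp: h_def split: if_splits)
    show "i \<notin> Pk u n" by (rule ni)
  qed
  have qd: "qdepth \<phi> \<le> n" using assms(2) by (simp add: fo2_n_def)
  have EFl: "sat u (\<lambda>v. i) \<phi> = sat w (\<lambda>v. j) \<phi>" if "j \<in> {1..length w}" "E n i j" for j
  proof (rule EF[where E=E and n=n and k=n])
    show "\<And>k p p'. E k p p' \<Longrightarrow> u ! (p - 1) = w ! (p' - 1)" by (simp add: E_def)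
    show "\<And>k p p'. E (Suc k) p p' \<Longrightarrow> E k p p'" by (rule E_mono)
    show "\<And>k p p' q. Suc k \<le> n \<Longrightarrow> E (Suc k) p p' \<Longrightarrow> p \<in> {1..length u} \<Longrightarrow> p' \<in> {1..length w}
     \<Longrightarrow> q \<in> {1..length u} \<Longrightarrow> \<exists>q'\<in>{1..length w}. E k q q' \<and> (p < q \<longleftrightarrow> p' < q') \<and> (q < p \<longleftrightarrow> q' < p')"
      by (rule forth)
    show "\<And>k p p' q'. Suc k \<le> n \<Longrightarrow> E (Suc k) p p' \<Longrightarrow> p \<in> {1..length u} \<Longrightarrow> p' \<in> {1..length w}
     \<Longrightarrow> q' \<in> {1..length w} \<Longrightarrow> \<exists>q\<in>{1..length u}. E k q q' \<and> (p < q \<longleftrightarrow> p' < q') \<and> (q < p \<longleftrightarrow> q' < p')"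
      by (rule bck)
    show "qdepth \<phi> \<le> n" by (rule qd)
    show "n \<le> n" by simp
    show "\<forall>x. E n ((\<lambda>v. i) x) ((\<lambda>v. j) x)" using that by simp
    show "\<forall>x. (\<lambda>v. i) x \<in> {1..length u}" using assms(4) by simp
    show "\<forall>x. (\<lambda>v. j) x \<in> {1..length w}" using that by simp
    show "\<forall>x y. ((\<lambda>v. i) x < (\<lambda>v. i) y) = ((\<lambda>v. j) x < (\<lambda>v. j) y)" by simp
  qed
  have hii: "h i = i" "h (Suc i) = i" by (auto simp: h_def)
  have E1: "E n i i" using hl[of i] iu lw hii by (simp add: E_def)
  have E2: "E n i (Suc i)" using hl[of "Suc i"] iu lw hii by (simp add: E_def)
  have m1: "models w i \<phi>" using EFl[OF _ E1] assms(5) iu lw by (simp add: models_def)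
  have m2: "models w (Suc i) \<phi>" using EFl[OF _ E2] assms(5) iu lw by (simp add: models_def)
  have U: "\<forall>x::'a list. \<forall>a b. a \<in> {1..length x} \<and> b \<in> {1..length x} \<and> models x a \<phi> \<and> models x b \<phi> \<longrightarrow> a = b"
    using assms(3) unfolding unique_position_def by blast
  have "i \<in> {1..length w} \<and> Suc i \<in> {1..length w} \<and> models w i \<phi> \<and> models w (Suc i) \<phi> \<longrightarrow> i = Suc i"
    using U by blast
  then have "i = Suc i" using m1 m2 iu lw by simp
  then show False by simp
qed


end
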